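(* Let $m\in\mathbb N$, $S$ a set of nonempty subsets of $\{0,\dots,m\}$, $(\beta_\sigma)_{\sigma\in S}$ elements of an ordered abelian group $G$, $(t_e)_{0\le e\le m}$ positive integers, and for $0\le e\le m$ let $(\gamma_{e,j})_{j<\lambda_e}$ ($\lambda_e$ a limit ordinal) be a well-ordered, monotone increasing family of elements $\ge0$ of $G$ without last element. For ordinals $j_e<\lambda_e$ and $\sigma\in S$ put $P_{\sigma,j_\sigma}=\beta_\sigma+\sum_{e\in\sigma}t_e\gamma_{e,j_e}$, where $j_\sigma=(j_e)_{e\in\sigma}$. Then for any ordinals $\rho_e<\lambda_e$ ($0\le e\le m$) there exist ordinals $\rho_e<j_e<\lambda_e$ ($0\le e\le m$) such that the elements $P_{\sigma,j_\sigma}$, $\sigma\in S$, are pairwise different. *)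

theory Defs
  imports Main
begin

definition natmul :: "nat \<Rightarrow> 'a::comm_monoid_add \<Rightarrow> 'a" where
  "natmul n x = (\<Sum>_<n. x)"

definition Pval :: "(nat set \<Rightarrow> 'g::ordered_ab_group_add) \<Rightarrow> (nat \<Rightarrow> nat) \<Rightarrow>
    (nat \<Rightarrow> 'i \<Rightarrow> 'g) \<Rightarrow> nat set \<Rightarrow> (nat \<Rightarrow> 'i) \<Rightarrow> 'g" where
  "Pval \<beta> t \<gamma> \<sigma> j = \<beta> \<sigma> + (\<Sum>e\<in>\<sigma>. natmul (t e) (\<gamma> e (j e)))"

end

theory Submission
  imports Defs
begin

lemma natmul_Suc: "natmul (Suc n) x = x + natmul n x"
  by (simp add: natmul_def add.commute)

lemma natmul_strict:
  fixes x y :: "'g::linordered_ab_group_add"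
  assumes "x < y" "0 < n"
  shows "natmul n x < natmul n y"
  using assms(2)
proof (induction n)
  case 0 then show ?case by simp
next
  case (Suc n)
  show ?case
  proof (cases "n = 0")
    case True then show ?thesis using assms(1) by (simp add: natmul_def)
  next
    case False
    then have "natmul n x < natmul n y" using Suc by simp
    then show ?thesis using assms(1) by (simp add: natmul_Suc add_strict_mono)
  qed
qed

lemma exists_avoid:
  fixes J :: "'i::wellorder set"
  assumes lim: "\<forall>i\<in>J. \<exists>k\<in>J. i < k" and r: "r \<in> J" and fB: "finite B"
  shows "\<exists>k\<in>J. r < k \<and> k \<notin> B"
proof (rule ccontr)
  assume "\<not> ?thesis"
  then have sub: "{k\<in>J. r < k} \<subseteq> B" by blast
  then have fA: "finite {k\<in>J. r < k}" using fB finite_subset by blast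
  obtain k0 where "k0 \<in> J" "r < k0" using lim r by blast
  then have ne: "{k\<in>J. r < k} \<noteq> {}" by blast
  let ?M = "Max {k\<in>J. r < k}"
  have M: "?M \<in> {k\<in>J. r < k}" using Max_in[OF fA ne] .
  then obtain k where k: "k \<in> J" "?M < k" using lim by blast
  then have "k \<in> {k\<in>J. r < k}" using M by auto
  then have "k \<le> ?M" using Max_ge[OF fA] by blast
  then show False using k by simp
qed

definition Qv :: "(nat set \<Rightarrow> 'g::linordered_ab_group_add) \<Rightarrow> (nat \<Rightarrow> nat) \<Rightarrow>
    (nat \<Rightarrow> 'i \<Rightarrow> 'g) \<Rightarrow> nat set \<Rightarrow> (nat \<Rightarrow> 'i) \<Rightarrow> nat \<Rightarrow> 'g" where
  "Qv \<beta> t \<gamma> \<sigma> j n = \<beta> \<sigma> + (\<Sum>e\<in>\<sigma> \<inter> {..<n}. natmul (t e) (\<gamma> e (j e)))"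

lemma Qv_cong:
  assumes "\<forall>e<n. j' e = j e"
  shows "Qv \<beta> t \<gamma> \<sigma> j' n = Qv \<beta> t \<gamma> \<sigma> j n"
  unfolding Qv_def using assms by (auto intro!: sum.cong)

lemma Qv_Suc:
  "Qv \<beta> t \<gamma> \<sigma> j (Suc n) = Qv \<beta> t \<gamma> \<sigma> j n + (if n \<in> \<sigma> then natmul (t n) (\<gamma> n (j n)) else 0)"
proof (cases "n \<in> \<sigma>")
  case True
  then have "\<sigma> \<inter> {..<Suc n} = insert n (\<sigma> \<inter> {..<n})" by auto
  then show ?thesis using True unfolding Qv_def by (simp add: algebra_simps)
next
  case False
  then have "\<sigma> \<inter> {..<Suc n} = \<sigma> \<inter> {..<n}" by (auto simp: less_Suc_eq)
  then show ?thesis using False unfolding Qv_def by simp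
qed

theorem lemma2p1:
  fixes m :: nat
    and S :: "nat set set"
    and \<beta> :: "nat set \<Rightarrow> 'g::linordered_ab_group_add"
    and t :: "nat \<Rightarrow> nat"
    and J :: "nat \<Rightarrow> 'i::wellorder set"
    and \<gamma> :: "nat \<Rightarrow> 'i \<Rightarrow> 'g"
    and \<rho> :: "nat \<Rightarrow> 'i"
  assumes S_sub: "\<forall>\<sigma>\<in>S. \<sigma> \<noteq> {} \<and> \<sigma> \<subseteq> {0..m}"
    and t_pos: "\<forall>e\<le>m. t e > 0"
    and J_limit: "\<forall>e\<le>m. J e \<noteq> {} \<and> (\<forall>i\<in>J e. \<exists>k\<in>J e. i < k)"
    and \<gamma>_mono: "\<forall>e\<le>m. strict_mono_on (J e) (\<gamma> e)"
    and \<gamma>_nonneg: "\<forall>e\<le>m. \<forall>i\<in>J e. \<gamma> e i \<ge> 0"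
    and \<rho>_in: "\<forall>e\<le>m. \<rho> e \<in> J e"
  shows "\<exists>j. (\<forall>e\<le>m. j e \<in> J e \<and> \<rho> e < j e) \<and>
             inj_on (\<lambda>\<sigma>. Pval \<beta> t \<gamma> \<sigma> j) S"
proof -
  have finS: "finite S"
    by (rule finite_subset[of S "Pow {0..m}"]) (use S_sub in auto)
  let ?Q = "Qv \<beta> t \<gamma>"
  have main: "n \<le> Suc m \<longrightarrow> (\<exists>j. (\<forall>e<n. j e \<in> J e \<and> \<rho> e < j e) \<and>
      (\<forall>\<sigma>\<in>S. \<forall>\<tau>\<in>S. \<sigma> \<noteq> \<tau> \<and> \<sigma> \<inter> {n..} = \<tau> \<inter> {n..} \<longrightarrow> ?Q \<sigma> j n \<noteq> ?Q \<tau> j n))" for n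
  proof (induction n)
    case 0
    show ?case by auto
  next
    case (Suc n)
    show ?case
    proof
      assume nle: "Suc n \<le> Suc m"
      then have nm: "n \<le> m" by simp
      from Suc nle obtain j where j1: "\<forall>e<n. j e \<in> J e \<and> \<rho> e < j e"
        and j2: "\<forall>\<sigma>\<in>S. \<forall>\<tau>\<in>S. \<sigma> \<noteq> \<tau> \<and> \<sigma> \<inter> {n..} = \<tau> \<inter> {n..} \<longrightarrow> ?Q \<sigma> j n \<noteq> ?Q \<tau> j n"
        by auto
      define f where "f k = natmul (t n) (\<gamma> n k)" for k
      define D where "D = (\<lambda>(\<sigma>,\<tau>). ?Q \<tau> j n - ?Q \<sigma> j n) ` (S \<times> S)"
      define B where "B = {k \<in> J n. f k \<in> D}"
      have injf: "inj_on f (J n)"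
      proof (rule inj_onI)
        fix x y assume xy: "x \<in> J n" "y \<in> J n" "f x = f y"
        show "x = y"
        proof (rule ccontr)
          assume "x \<noteq> y"
          then have "x < y \<or> y < x" by auto
          moreover have "\<And>a b. a \<in> J n \<Longrightarrow> b \<in> J n \<Longrightarrow> a < b \<Longrightarrow> f a < f b"
            unfolding f_def
            using \<gamma>_mono nm t_pos by (intro natmul_strict) (auto simp: strict_mono_on_def)
          ultimately show False using xy by (metis less_irrefl)
        qed
      qed
      have "finite B"
      proof (rule finite_imageD)
        show "finite (f ` B)"
          by (rule finite_subset[of _ D]) (auto simp: B_def D_def finS)
        show "inj_on f B" using injf by (rule inj_on_subset) (auto simp: B_def)
      qed
      then obtain k where k: "k \<in> J n" "\<rho> n < k" "k \<notin> B"
        using exists_avoid[of "J n" "\<rho> n" B] J_limit \<rho>_in nm by blast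
      define j' where "j' = j(n := k)"
      have agree: "\<forall>e<n. j' e = j e" by (simp add: j'_def)
      have Qs: "?Q \<sigma> j' (Suc n) = ?Q \<sigma> j n + (if n \<in> \<sigma> then f k else 0)" for \<sigma>
        using Qv_Suc[of \<beta> t \<gamma> \<sigma> j' n] Qv_cong[OF agree, of \<beta> t \<gamma> \<sigma>]
        by (simp add: f_def j'_def[symmetric]) (simp add: j'_def)
      show "\<exists>j. (\<forall>e<Suc n. j e \<in> J e \<and> \<rho> e < j e) \<and>
        (\<forall>\<sigma>\<in>S. \<forall>\<tau>\<in>S. \<sigma> \<noteq> \<tau> \<and> \<sigma> \<inter> {Suc n..} = \<tau> \<inter> {Suc n..} \<longrightarrow> ?Q \<sigma> j (Suc n) \<noteq> ?Q \<tau> j (Suc n))"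
      proof (intro exI[of _ j'] conjI ballI impI allI)
        fix e assume "e < Suc n"
        then show "j' e \<in> J e" using j1 k by (auto simp: j'_def less_Suc_eq)
      next
        fix e assume "e < Suc n"
        then show "\<rho> e < j' e" using j1 k by (auto simp: j'_def less_Suc_eq)
      next
        fix \<sigma> \<tau> assume st: "\<sigma> \<in> S" "\<tau> \<in> S" and ne: "\<sigma> \<noteq> \<tau> \<and> \<sigma> \<inter> {Suc n..} = \<tau> \<inter> {Suc n..}"
        have kB: "f k \<noteq> ?Q b j n - ?Q a j n" if "a \<in> S" "b \<in> S" for a b
        proof
          assume "f k = ?Q b j n - ?Q a j n"
          then have "f k \<in> D" unfolding D_def using that by force
          then show False using k by (simp add: B_def)
        qed
        show "?Q \<sigma> j' (Suc n) \<noteq> ?Q \<tau> j' (Suc n)"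
        proof (cases "(n \<in> \<sigma>) = (n \<in> \<tau>)")
          case True
          have "\<sigma> \<inter> {n..} = \<tau> \<inter> {n..}"
          proof -
            have "\<And>A. A \<inter> {n..} = (A \<inter> {n}) \<union> (A \<inter> {Suc n..})" by auto
            then show ?thesis using True ne by (metis Int_insert_right_if0 Int_insert_right_if1 Int_empty_right)
          qed
          then have "?Q \<sigma> j n \<noteq> ?Q \<tau> j n" using j2 st ne by blast
          then show ?thesis using True Qs[of \<sigma>] Qs[of \<tau>] by auto
        next
          case False
          then consider "n \<in> \<sigma>" "n \<notin> \<tau>" | "n \<notin> \<sigma>" "n \<in> \<tau>" by blast
          then show ?thesis
          proof cases
            case 1
            have "?Q \<sigma> j n + f k \<noteq> ?Q \<tau> j n"
              using kB[OF st] by (metis add_diff_cancel_left')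
            then show ?thesis using 1 Qs[of \<sigma>] Qs[of \<tau>] by simp
          next
            case 2
            have "?Q \<sigma> j n \<noteq> ?Q \<tau> j n + f k"
              using kB[OF st(2) st(1)] by (metis add_diff_cancel_left')
            then show ?thesis using 2 Qs[of \<sigma>] Qs[of \<tau>] by simp
          qed
        qed
      qed
    qed
  qed
  from main[of "Suc m"] obtain j where j1: "\<forall>e<Suc m. j e \<in> J e \<and> \<rho> e < j e"
    and j2: "\<forall>\<sigma>\<in>S. \<forall>\<tau>\<in>S. \<sigma> \<noteq> \<tau> \<and> \<sigma> \<inter> {Suc m..} = \<tau> \<inter> {Suc m..} \<longrightarrow> ?Q \<sigma> j (Suc m) \<noteq> ?Q \<tau> j (Suc m)"
    by auto
  have QP: "?Q \<sigma> j (Suc m) = Pval \<beta> t \<gamma> \<sigma> j" if "\<sigma> \<in> S" for \<sigma>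
  proof -
    have "\<sigma> \<inter> {..<Suc m} = \<sigma>" using S_sub that by (auto simp: less_Suc_eq_le subset_eq)
    then show ?thesis by (simp add: Qv_def Pval_def)
  qed
  have emp: "\<sigma> \<inter> {Suc m..} = {}" if "\<sigma> \<in> S" for \<sigma> using S_sub that by (fastforce simp: subset_eq)
  show ?thesis
  proof (intro exI[of _ j] conjI)
    show "\<forall>e\<le>m. j e \<in> J e \<and> \<rho> e < j e" using j1 by auto
    show "inj_on (\<lambda>\<sigma>. Pval \<beta> t \<gamma> \<sigma> j) S"
      by (rule inj_onI) (metis QP emp j2)
  qed
qed

end
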